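(* Let $L_{n+1},\dots,L_{n+m}\ge0$ be random risks and $E_{n+1},\dots,E_{n+m}$ random variables with $E_{n+j}\ge0$ a.s. and $\mathbb{E}[L_{n+j}E_{n+j}]\le1$ for all $j$. Fix $\alpha\in(0,1)$. (Heterogeneous boosting) Let $\xi_{n+1},\dots,\xi_{n+m}$ be i.i.d. $\mathrm{Unif}([0,1])$ independent of everything else, $k^*_{\mathrm{hete}}=\max\{k\in\{1,\dots,m\}:\sum_{j=1}^m\mathbf{1}\{E_{n+j}/\xi_{n+j}\ge m/(\alpha k)\}\ge k\}$ and $\mathcal{R}_{\mathrm{hete}}=\{j:E_{n+j}/\xi_{n+j}\ge m/(\alpha k^*_{\mathrm{hete}})\}$. (Homogeneous boosting) Let $\xi\sim\mathrm{Unif}([0,1])$ independent of everything else, $k^*_{\mathrm{homo}}=\max\{k:\sum_{j=1}^m\mathbf{1}\{E_{n+j}/\xi\ge m/(\alpha k)\}\ge k\}$ and $\mathcal{R}_{\mathrm{homo}}=\{j:E_{n+j}/\xi\ge m/(\alpha k^*_{\mathrm{homo}})\}$. (In both cases the selection set is empty if the maximum is over an empty set.) Then for $\mathcal{R}\in\{\mathcal{R}_{\mathrm{hete}},\mathcal{R}_{\mathrm{homo}}\}$, $$\mathbb{E}\Big[\frac{\sum_{j=1}^mL_{n+j}\mathbf{1}\{j\in\mathcal{R}\}}{1\vee|\mathcal{R}|}\Big]\le\alpha.$$ *)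

theory Defs
  imports "HOL-Probability.Probability"
begin

text \<open>The m test points carry indices n+1,...,n+m;
  T (n+j) is the (boosted) e-value of test point j.
  ebh_kstar returns the largest k in {1..m} with
  #{j. T(n+j) >= m/(alpha k)} >= k, and 0 if no such k exists.\<close>

definition ebh_kset :: "nat \<Rightarrow> nat \<Rightarrow> real \<Rightarrow> (nat \<Rightarrow> real) \<Rightarrow> nat set" where
  "ebh_kset n m \<alpha> T =
     {k \<in> {1..m}. card {j \<in> {1..m}. T (n + j) \<ge> real m / (\<alpha> * real k)} \<ge> k}"

definition ebh_kstar :: "nat \<Rightarrow> nat \<Rightarrow> real \<Rightarrow> (nat \<Rightarrow> real) \<Rightarrow> nat" where
  "ebh_kstar n m \<alpha> T = (if ebh_kset n m \<alpha> T = {} then 0 else Max (ebh_kset n m \<alpha> T))"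

definition ebh_sel :: "nat \<Rightarrow> nat \<Rightarrow> real \<Rightarrow> (nat \<Rightarrow> real) \<Rightarrow> nat set" where
  "ebh_sel n m \<alpha> T =
     (if ebh_kset n m \<alpha> T = {} then {}
      else {j \<in> {1..m}. T (n + j) \<ge> real m / (\<alpha> * real (ebh_kstar n m \<alpha> T))})"

definition risk_ratio :: "nat \<Rightarrow> (nat \<Rightarrow> real) \<Rightarrow> nat set \<Rightarrow> real" where
  "risk_ratio n L R = (\<Sum>j\<in>R. L (n + j)) / max 1 (real (card R))"

end

theory Submission
  imports Defs
begin

lemma kset_sub: "ebh_kset n m \<alpha> T \<subseteq> {1..m}"
  by (auto simp: ebh_kset_def)

lemma kset_fin: "finite (ebh_kset n m \<alpha> T)"
  by (rule finite_subset[OF kset_sub]) simp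

lemma kstar_in: "ebh_kset n m \<alpha> T \<noteq> {} \<Longrightarrow> ebh_kstar n m \<alpha> T \<in> ebh_kset n m \<alpha> T"
  by (simp add: ebh_kstar_def kset_fin)

lemma kstar_max: "k \<in> ebh_kset n m \<alpha> T \<Longrightarrow> k \<le> ebh_kstar n m \<alpha> T"
  using kset_fin by (auto simp: ebh_kstar_def)

lemma kstar_pos: "ebh_kset n m \<alpha> T \<noteq> {} \<Longrightarrow> 1 \<le> ebh_kstar n m \<alpha> T"
  using kstar_in[of n m \<alpha> T] kset_sub[of n m \<alpha> T] by auto

lemma kstar_le_m: "ebh_kstar n m \<alpha> T \<le> m"
proof (cases "ebh_kset n m \<alpha> T = {}")
  case True then show ?thesis by (simp add: ebh_kstar_def)
next
  case False then show ?thesis using kstar_in[OF False] kset_sub[of n m \<alpha> T] by auto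
qed

lemma kset_mem: "k \<in> ebh_kset n m \<alpha> T \<longleftrightarrow> k \<in> {1..m} \<and> k \<le> card {j \<in> {1..m}. real m / (\<alpha> * real k) \<le> T (n + j)}"
  by (simp add: ebh_kset_def)

lemma sel_sub: "ebh_sel n m \<alpha> T \<subseteq> {1..m}"
  by (auto simp: ebh_sel_def)

lemma sel_iff: "j \<in> ebh_sel n m \<alpha> T \<longleftrightarrow> ebh_kset n m \<alpha> T \<noteq> {} \<and> j \<in> {1..m}
   \<and> real m / (\<alpha> * real (ebh_kstar n m \<alpha> T)) \<le> T (n + j)"
  by (auto simp: ebh_sel_def)

lemma card_thr_mono:
  assumes "t \<le> t'"
  shows "card {j \<in> {1..m}. t' \<le> T (n + j)} \<le> card {j \<in> {1..(m::nat)}. t \<le> (T (n + j)::real)}"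
  by (rule card_mono) (use assms in auto)

lemma thr_anti:
  assumes "0 < \<alpha>" "1 \<le> k" "k \<le> l"
  shows "real m / (\<alpha> * real l) \<le> real m / (\<alpha> * real k)"
  using assms by (intro divide_left_mono) (auto intro!: mult_pos_pos)

lemma card_sel:
  assumes "0 < \<alpha>" "ebh_kset n m \<alpha> T \<noteq> {}"
  shows "card (ebh_sel n m \<alpha> T) = ebh_kstar n m \<alpha> T"
proof -
  define k where "k = ebh_kstar n m \<alpha> T"
  define R where "R = ebh_sel n m \<alpha> T"
  have R: "R = {j \<in> {1..m}. real m / (\<alpha> * real k) \<le> T (n + j)}"
    using assms by (simp add: R_def ebh_sel_def k_def)
  have kin: "k \<in> ebh_kset n m \<alpha> T" using kstar_in assms k_def by blast
  then have k1: "1 \<le> k" "k \<le> m" and ck: "k \<le> card R" using R kset_mem by auto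
  have "R \<subseteq> {1..m}" using sel_sub R_def by blast
  then have "card R \<le> card {1..m}" by (intro card_mono) auto
  then have cm: "card R \<le> m" by simp
  have "card R = k"
  proof (rule ccontr)
    assume "card R \<noteq> k"
    then have gt: "k < card R" using ck R_def k_def by auto
    have "card {j \<in> {1..m}. real m / (\<alpha> * real k) \<le> T (n + j)} \<le> card {j \<in> {1..m}. real m / (\<alpha> * real (card R)) \<le> T (n + j)}"
      by (rule card_thr_mono, rule thr_anti) (use assms k1 gt in auto)
    then have "card R \<le> card {j \<in> {1..m}. real m / (\<alpha> * real (card R)) \<le> T (n + j)}"
      using R by simp
    then have "card R \<in> ebh_kset n m \<alpha> T" using kset_mem gt k1 cm by auto
    then have "card R \<le> k" using kstar_max k_def by blast
    then show False using gt by simp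
  qed
  then show ?thesis using R_def k_def by simp
qed

lemma mono_kset:
  assumes "0 < \<alpha>" "\<And>j. j \<in> {1..m} \<Longrightarrow> max 0 (T (n+j)) \<le> max 0 (T' (n+j))"
  shows "ebh_kset n m \<alpha> T \<subseteq> ebh_kset n m \<alpha> T'"
proof
  fix k assume k: "k \<in> ebh_kset n m \<alpha> T"
  then have k1: "k \<in> {1..m}" using kset_mem by blast
  have pos: "0 < real m / (\<alpha> * real k)" using k1 assms by auto
  have "{j \<in> {1..m}. real m / (\<alpha> * real k) \<le> T (n + j)} \<subseteq> {j \<in> {1..m}. real m / (\<alpha> * real k) \<le> T' (n + j)}"
  proof safe
    fix j assume j: "j \<in> {1..m}" "real m / (\<alpha> * real k) \<le> T (n + j)"
    show "real m / (\<alpha> * real k) \<le> T' (n + j)" using assms(2)[OF j(1)] j(2) pos by linarith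
  qed
  then have "card {j \<in> {1..m}. real m / (\<alpha> * real k) \<le> T (n + j)} \<le> card {j \<in> {1..m}. real m / (\<alpha> * real k) \<le> T' (n + j)}"
    by (intro card_mono) auto
  then show "k \<in> ebh_kset n m \<alpha> T'" using k kset_mem by fastforce
qed

lemma kstar_mono:
  assumes "ebh_kset n m \<alpha> T \<noteq> {}" "ebh_kset n m \<alpha> T \<subseteq> ebh_kset n m \<alpha> T'"
  shows "ebh_kstar n m \<alpha> T \<le> ebh_kstar n m \<alpha> T'"
  using assms kstar_in kstar_max by blast

lemma kset_upd_nonempty:
  assumes "0 < \<alpha>" "j \<in> {1..m}"
  shows "1 \<in> ebh_kset n m \<alpha> (T(n + j := real m / \<alpha>))"
proof -
  have "{j} \<subseteq> {j' \<in> {1..m}. real m / (\<alpha> * real (1::nat)) \<le> (T(n + j := real m / \<alpha>)) (n + j')}"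
    using assms by auto
  then have "1 \<le> card {j' \<in> {1..m}. real m / (\<alpha> * real (1::nat)) \<le> (T(n + j := real m / \<alpha>)) (n + j')}"
    using card_mono[of "{j' \<in> {1..m}. real m / (\<alpha> * real (1::nat)) \<le> (T(n + j := real m / \<alpha>)) (n + j')}" "{j}"]
    by auto
  then show ?thesis using assms kset_mem by auto
qed

lemma hetero_key:
  assumes "0 < \<alpha>" "j \<in> ebh_sel n m \<alpha> T"
  shows "ebh_kstar n m \<alpha> (T(n + j := real m / \<alpha>)) = ebh_kstar n m \<alpha> T"
proof -
  define T' where "T' = T(n + j := real m / \<alpha>)"
  define k where "k = ebh_kstar n m \<alpha> T"
  define k' where "k' = ebh_kstar n m \<alpha> T'"
  have ne: "ebh_kset n m \<alpha> T \<noteq> {}" and j: "j \<in> {1..m}"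
    and sj: "real m / (\<alpha> * real k) \<le> T (n + j)" using assms sel_iff k_def by auto
  have ne': "ebh_kset n m \<alpha> T' \<noteq> {}" using kset_upd_nonempty[OF assms(1) j] T'_def by blast
  have kin: "k \<in> ebh_kset n m \<alpha> T" using kstar_in ne k_def by blast
  have k1: "1 \<le> k" using kstar_pos ne k_def by blast
  have eq: "card {j' \<in> {1..m}. real m / (\<alpha> * real l) \<le> T (n + j')} =
            card {j' \<in> {1..m}. real m / (\<alpha> * real l) \<le> T' (n + j')}" if "k \<le> l" for l
  proof -
    have a: "real m / (\<alpha> * real l) \<le> real m / (\<alpha> * real k)" using thr_anti assms(1) k1 that by blast
    have b: "real m / (\<alpha> * real l) \<le> real m / \<alpha>"
      using thr_anti[OF assms(1) order_refl[of 1] order_trans[OF k1 that], of m] by simp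
    show ?thesis
      by (rule arg_cong[where f=card]) (use a b sj in \<open>auto simp: T'_def\<close>)
  qed
  have "k \<in> ebh_kset n m \<alpha> T'" using kin eq[of k] kset_mem by auto
  then have "k \<le> k'" using kstar_max k'_def by blast
  moreover have "k' \<in> ebh_kset n m \<alpha> T'" using kstar_in ne' k'_def by blast
  then have "k' \<in> ebh_kset n m \<alpha> T" using eq[OF \<open>k \<le> k'\<close>] kset_mem by auto
  then have "k' \<le> k" using kstar_max k_def by blast
  ultimately show ?thesis using k_def k'_def T'_def by simp
qed

lemma sel_point:
  assumes "0 < \<alpha>" "j \<in> ebh_sel n m \<alpha> T" "T (n + j) = e / z"
  shows "z \<le> 0 \<or> z \<le> \<alpha> * e / real m * real (ebh_kstar n m \<alpha> T)"
proof (cases "z \<le> 0")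
  case False
  define k where "k = ebh_kstar n m \<alpha> T"
  have ne: "ebh_kset n m \<alpha> T \<noteq> {}" and j: "j \<in> {1..m}"
    and sj: "real m / (\<alpha> * real k) \<le> e / z" using assms sel_iff k_def by auto
  have k1: "1 \<le> k" using kstar_pos ne k_def by blast
  have m1: "1 \<le> m" using j by auto
  have "real m * z \<le> e * (\<alpha> * real k)"
    using sj False assms(1) k1 by (simp add: divide_le_eq le_divide_eq mult.commute)
  then have "z \<le> \<alpha> * e / real m * real k"
    using m1 by (simp add: field_simps)
  then show ?thesis by (simp add: k_def)
qed simp

lemma rr_bound:
  assumes "R \<subseteq> {1..m}"
  shows "risk_ratio n L R \<le> (\<Sum>j\<in>{1..m}. if j \<in> R then max 0 (L (n+j)) / real (card R) else 0)"
proof (cases "R = {}")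
  case True then show ?thesis by (simp add: risk_ratio_def)
next
  case False
  have fin: "finite R" by (rule finite_subset[OF assms]) simp
  then have c: "max 1 (real (card R)) = real (card R)" using False
    by (simp add: Suc_le_eq card_gt_0_iff)
  have "risk_ratio n L R = (\<Sum>j\<in>R. L (n + j) / real (card R))"
    by (simp add: risk_ratio_def c sum_divide_distrib)
  also have "\<dots> \<le> (\<Sum>j\<in>R. max 0 (L (n + j)) / real (card R))"
    by (intro sum_mono divide_right_mono) auto
  also have "\<dots> = (\<Sum>j\<in>{1..m}. if j \<in> R then max 0 (L (n+j)) / real (card R) else 0)"
    using sum.inter_restrict[OF finite_atLeastAtMost[of 1 m], of "\<lambda>j. max 0 (L (n + j)) / real (card R)" R]
      Int_absorb1[OF assms] by simp
  finally show ?thesis .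
qed

lemma card_filter_sum: "finite A \<Longrightarrow> real (card {j \<in> A. P j}) = (\<Sum>j\<in>A. if P j then 1 else 0)"
proof -
  assume A: "finite A"
  have "real (card {j \<in> A. P j}) = (\<Sum>j\<in>{j \<in> A. P j}. 1)" by simp
  also have "\<dots> = (\<Sum>j\<in>A. if P j then 1 else 0)" by (rule sum.inter_filter[OF A])
  finally show ?thesis .
qed

lemma kset_mem_sum:
  "k \<in> ebh_kset n m \<alpha> T \<longleftrightarrow> k \<in> {1..m} \<and>
     real k \<le> (\<Sum>j\<in>{1..m}. if real m / (\<alpha> * real k) \<le> T (n + j) then 1 else (0::real))"
  unfolding kset_mem card_filter_sum[OF finite_atLeastAtMost, symmetric] by simp

lemma kstar_real_Max:
  "real (ebh_kstar n m \<alpha> T) = Max ((\<lambda>k. if k \<in> ebh_kset n m \<alpha> T then real k else 0) ` {0..m})"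
proof (cases "ebh_kset n m \<alpha> T = {}")
  case True
  then have "(\<lambda>k. if k \<in> ebh_kset n m \<alpha> T then real k else 0) ` {0..m} = {0}" by auto
  then show ?thesis using True by (simp add: ebh_kstar_def)
next
  case False
  have kin: "ebh_kstar n m \<alpha> T \<in> ebh_kset n m \<alpha> T" using kstar_in[OF False] .
  have km: "ebh_kstar n m \<alpha> T \<in> {0..m}" using kstar_le_m by auto
  show ?thesis
  proof (rule sym, rule Max_eqI)
    show "finite ((\<lambda>k. if k \<in> ebh_kset n m \<alpha> T then real k else 0) ` {0..m})" by simp
    show "real (ebh_kstar n m \<alpha> T) \<in> (\<lambda>k. if k \<in> ebh_kset n m \<alpha> T then real k else 0) ` {0..m}"
      using kin km by (intro image_eqI[of _ _ "ebh_kstar n m \<alpha> T"]) auto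
    fix y assume "y \<in> (\<lambda>k. if k \<in> ebh_kset n m \<alpha> T then real k else 0) ` {0..m}"
    then obtain k where "y = (if k \<in> ebh_kset n m \<alpha> T then real k else 0)" by blast
    then show "y \<le> real (ebh_kstar n m \<alpha> T)" using kstar_max[of k n m \<alpha> T] by (cases "k \<in> ebh_kset n m \<alpha> T") auto
  qed
qed

lemma kset_ne_iff: "ebh_kset n m \<alpha> T \<noteq> {} \<longleftrightarrow> 1 \<le> real (ebh_kstar n m \<alpha> T)"
proof
  assume "ebh_kset n m \<alpha> T \<noteq> {}" then show "1 \<le> real (ebh_kstar n m \<alpha> T)" using kstar_pos by simp
next
  assume "1 \<le> real (ebh_kstar n m \<alpha> T)" then show "ebh_kset n m \<alpha> T \<noteq> {}" by (auto simp: ebh_kstar_def)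
qed

lemma rr_closed:
  "risk_ratio n L (ebh_sel n m \<alpha> T) =
    (\<Sum>j\<in>{1..m}. if 1 \<le> real (ebh_kstar n m \<alpha> T) \<and> real m / (\<alpha> * real (ebh_kstar n m \<alpha> T)) \<le> T (n + j) then L (n + j) else 0) /
    max 1 (\<Sum>j\<in>{1..m}. if 1 \<le> real (ebh_kstar n m \<alpha> T) \<and> real m / (\<alpha> * real (ebh_kstar n m \<alpha> T)) \<le> T (n + j) then 1 else 0)"
proof -
  define P where "P j \<longleftrightarrow> 1 \<le> real (ebh_kstar n m \<alpha> T) \<and> real m / (\<alpha> * real (ebh_kstar n m \<alpha> T)) \<le> T (n + j)" for j
  have S: "ebh_sel n m \<alpha> T = {j \<in> {1..m}. P j}"
    unfolding P_def using kset_ne_iff[of n m \<alpha> T] by (auto simp: sel_iff)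
  have "(\<Sum>j\<in>{j \<in> {1..m}. P j}. L (n + j)) = (\<Sum>j\<in>{1..m}. if P j then L (n + j) else 0)"
    by (rule sum.inter_filter) simp
  moreover have "real (card {j \<in> {1..m}. P j}) = (\<Sum>j\<in>{1..m}. if P j then 1 else 0)"
    by (rule card_filter_sum) simp
  ultimately show ?thesis unfolding risk_ratio_def S P_def by simp
qed

lemma meas_kstar:
  assumes "\<And>j. j \<in> {1..m} \<Longrightarrow> (\<lambda>\<omega>. T \<omega> (n + j)) \<in> borel_measurable N"
  shows "(\<lambda>\<omega>. real (ebh_kstar n m \<alpha> (T \<omega>))) \<in> borel_measurable N"
proof -
  have eq: "(\<lambda>\<omega>. real (ebh_kstar n m \<alpha> (T \<omega>))) = (\<lambda>\<omega>. Max ((\<lambda>k. if k \<in> {1..m} \<and>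
     real k \<le> (\<Sum>j\<in>{1..m}. if real m / (\<alpha> * real k) \<le> T \<omega> (n + j) then 1 else (0::real)) then real k else 0) ` {0..m}))"
    unfolding kstar_real_Max kset_mem_sum ..
  show ?thesis unfolding eq
  proof (intro borel_measurable_Max finite_atLeastAtMost)
    fix k assume "k \<in> {0..m}"
    have "(\<lambda>\<omega>. (\<Sum>j\<in>{1..m}. if real m / (\<alpha> * real k) \<le> T \<omega> (n + j) then 1 else (0::real))) \<in> borel_measurable N"
    proof (intro borel_measurable_sum)
      fix j assume j: "j \<in> {1..m}"
      note [measurable] = assms[OF j]
      show "(\<lambda>\<omega>. if real m / (\<alpha> * real k) \<le> T \<omega> (n + j) then 1 else (0::real)) \<in> borel_measurable N"
        by measurable
    qed
    note [measurable] = this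
    show "(\<lambda>\<omega>. if k \<in> {1..m} \<and> real k \<le> (\<Sum>j\<in>{1..m}. if real m / (\<alpha> * real k) \<le> T \<omega> (n + j) then 1 else (0::real)) then real k else 0) \<in> borel_measurable N"
      by measurable
  qed
qed

lemma meas_rr:
  assumes "\<And>j. j \<in> {1..m} \<Longrightarrow> (\<lambda>\<omega>. T \<omega> (n + j)) \<in> borel_measurable N"
    and "\<And>j. j \<in> {1..m} \<Longrightarrow> (\<lambda>\<omega>. L \<omega> (n + j)) \<in> borel_measurable N"
  shows "(\<lambda>\<omega>. risk_ratio n (L \<omega>) (ebh_sel n m \<alpha> (T \<omega>))) \<in> borel_measurable N"
proof -
  have K[measurable]: "(\<lambda>\<omega>. real (ebh_kstar n m \<alpha> (T \<omega>))) \<in> borel_measurable N" by (rule meas_kstar) (rule assms(1))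
  have A: "(\<lambda>\<omega>. \<Sum>j\<in>{1..m}. if 1 \<le> real (ebh_kstar n m \<alpha> (T \<omega>)) \<and> real m / (\<alpha> * real (ebh_kstar n m \<alpha> (T \<omega>))) \<le> T \<omega> (n + j) then L \<omega> (n + j) else 0) \<in> borel_measurable N"
  proof (intro borel_measurable_sum)
    fix j assume j: "j \<in> {1..m}"
    note [measurable] = assms(1)[OF j] assms(2)[OF j]
    show "(\<lambda>\<omega>. if 1 \<le> real (ebh_kstar n m \<alpha> (T \<omega>)) \<and> real m / (\<alpha> * real (ebh_kstar n m \<alpha> (T \<omega>))) \<le> T \<omega> (n + j) then L \<omega> (n + j) else 0) \<in> borel_measurable N"
      by measurable
  qed
  have B: "(\<lambda>\<omega>. \<Sum>j\<in>{1..m}. if 1 \<le> real (ebh_kstar n m \<alpha> (T \<omega>)) \<and> real m / (\<alpha> * real (ebh_kstar n m \<alpha> (T \<omega>))) \<le> T \<omega> (n + j) then 1 else (0::real)) \<in> borel_measurable N"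
  proof (intro borel_measurable_sum)
    fix j assume j: "j \<in> {1..m}"
    note [measurable] = assms(1)[OF j]
    show "(\<lambda>\<omega>. if 1 \<le> real (ebh_kstar n m \<alpha> (T \<omega>)) \<and> real m / (\<alpha> * real (ebh_kstar n m \<alpha> (T \<omega>))) \<le> T \<omega> (n + j) then 1 else (0::real)) \<in> borel_measurable N"
      by measurable
  qed
  note [measurable] = A B
  show ?thesis unfolding rr_closed by measurable
qed

definition Khet :: "nat \<Rightarrow> nat \<Rightarrow> real \<Rightarrow> (nat \<Rightarrow> real) \<Rightarrow> (nat \<Rightarrow> real) \<Rightarrow> nat \<Rightarrow> real" where
  "Khet n m \<alpha> Ev z j = real (ebh_kstar n m \<alpha> ((\<lambda>k. Ev k / z k)(n + j := real m / \<alpha>)))"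

definition Gfun :: "real \<Rightarrow> real \<Rightarrow> real \<Rightarrow> real \<Rightarrow> ennreal" where
  "Gfun t c K a = (if t \<le> 0 \<or> t \<le> c * K then ennreal (max 0 a / K) else 0)"

lemma ennreal_rr_le:
  assumes "R \<subseteq> {1..m}"
  shows "ennreal (risk_ratio n L R) \<le> (\<Sum>j\<in>{1..m}. ennreal (if j \<in> R then max 0 (L (n+j)) / real (card R) else 0))"
proof -
  have "ennreal (risk_ratio n L R) \<le> ennreal (\<Sum>j\<in>{1..m}. if j \<in> R then max 0 (L (n+j)) / real (card R) else 0)"
    using rr_bound[OF assms] by (rule ennreal_leI)
  also have "\<dots> = (\<Sum>j\<in>{1..m}. ennreal (if j \<in> R then max 0 (L (n+j)) / real (card R) else 0))"
    by (rule sum_ennreal[symmetric]) auto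
  finally show ?thesis .
qed

lemma hetero_pw:
  assumes "0 < \<alpha>"
  shows "ennreal (risk_ratio n Lv (ebh_sel n m \<alpha> (\<lambda>k. Ev k / z k))) \<le>
     (\<Sum>j\<in>{1..m}. Gfun (z (n + j)) (\<alpha> * Ev (n + j) / real m) (Khet n m \<alpha> Ev z j) (Lv (n + j)))"
proof -
  define T where "T = (\<lambda>k. Ev k / z k)"
  define R where "R = ebh_sel n m \<alpha> T"
  have "ennreal (risk_ratio n Lv R) \<le> (\<Sum>j\<in>{1..m}. ennreal (if j \<in> R then max 0 (Lv (n+j)) / real (card R) else 0))"
    unfolding R_def by (rule ennreal_rr_le) (rule sel_sub)
  also have "\<dots> \<le> (\<Sum>j\<in>{1..m}. Gfun (z (n + j)) (\<alpha> * Ev (n + j) / real m) (Khet n m \<alpha> Ev z j) (Lv (n + j)))"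
  proof (rule sum_mono)
    fix j assume j: "j \<in> {1..m}"
    show "ennreal (if j \<in> R then max 0 (Lv (n+j)) / real (card R) else 0) \<le> Gfun (z (n + j)) (\<alpha> * Ev (n + j) / real m) (Khet n m \<alpha> Ev z j) (Lv (n + j))"
    proof (cases "j \<in> R")
      case False then show ?thesis by simp
    next
      case True
      then have ne: "ebh_kset n m \<alpha> T \<noteq> {}" by (simp add: R_def sel_iff)
      have cR: "card R = ebh_kstar n m \<alpha> T" using card_sel[OF assms ne] R_def by simp
      have K: "Khet n m \<alpha> Ev z j = real (ebh_kstar n m \<alpha> T)"
        using hetero_key[OF assms, of j n m T] True R_def by (simp add: Khet_def T_def)
      have pt: "z (n + j) \<le> 0 \<or> z (n + j) \<le> \<alpha> * Ev (n + j) / real m * real (ebh_kstar n m \<alpha> T)"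
        using sel_point[OF assms, of j n m T "Ev (n + j)" "z (n + j)"] True R_def T_def by simp
      show ?thesis using True pt unfolding Gfun_def K cR by simp
    qed
  qed
  finally show ?thesis unfolding R_def T_def .
qed

lemma Khet_pos:
  assumes "0 < \<alpha>" "j \<in> {1..m}"
  shows "1 \<le> Khet n m \<alpha> Ev z j"
proof -
  have "1 \<in> ebh_kset n m \<alpha> ((\<lambda>k. Ev k / z k)(n + j := real m / \<alpha>))" by (rule kset_upd_nonempty[OF assms])
  then have "ebh_kset n m \<alpha> ((\<lambda>k. Ev k / z k)(n + j := real m / \<alpha>)) \<noteq> {}" by blast
  then have "1 \<le> ebh_kstar n m \<alpha> ((\<lambda>k. Ev k / z k)(n + j := real m / \<alpha>))" by (rule kstar_pos)
  then show ?thesis unfolding Khet_def by simp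
qed

lemma Khet_upd:
  "Khet n m \<alpha> Ev (z(n + j := t)) j = Khet n m \<alpha> Ev z j"
proof -
  have "(\<lambda>k. Ev k / (z(n + j := t)) k)(n + j := real m / \<alpha>) = (\<lambda>k. Ev k / z k)(n + j := real m / \<alpha>)"
    by auto
  then show ?thesis unfolding Khet_def by simp
qed

definition Shom :: "nat \<Rightarrow> nat \<Rightarrow> real \<Rightarrow> (nat \<Rightarrow> real) \<Rightarrow> nat \<Rightarrow> nat set" where
  "Shom n m \<alpha> Ev j = {ebh_kstar n m \<alpha> (\<lambda>k. Ev k / t) | t. 0 < t \<and> j \<in> ebh_sel n m \<alpha> (\<lambda>k. Ev k / t)}"

definition Khom :: "nat \<Rightarrow> nat \<Rightarrow> real \<Rightarrow> (nat \<Rightarrow> real) \<Rightarrow> nat \<Rightarrow> real" where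
  "Khom n m \<alpha> Ev j = real (if Shom n m \<alpha> Ev j = {} then 1 else Min (Shom n m \<alpha> Ev j))"

lemma Shom_fin: "finite (Shom n m \<alpha> Ev j)"
proof -
  have "Shom n m \<alpha> Ev j \<subseteq> {0..m}" using kstar_le_m by (auto simp: Shom_def)
  then show ?thesis by (rule finite_subset) simp
qed

lemma Khom_pos:
  shows "1 \<le> Khom n m \<alpha> Ev j"
proof (cases "Shom n m \<alpha> Ev j = {}")
  case True then show ?thesis by (simp add: Khom_def)
next
  case False
  have "Min (Shom n m \<alpha> Ev j) \<in> Shom n m \<alpha> Ev j" using Min_in[OF Shom_fin False] .
  then obtain t where "Min (Shom n m \<alpha> Ev j) = ebh_kstar n m \<alpha> (\<lambda>k. Ev k / t)" "j \<in> ebh_sel n m \<alpha> (\<lambda>k. Ev k / t)"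
    unfolding Shom_def by blast
  then have "ebh_kset n m \<alpha> (\<lambda>k. Ev k / t) \<noteq> {}" by (simp add: sel_iff)
  then have "1 \<le> ebh_kstar n m \<alpha> (\<lambda>k. Ev k / t)" by (rule kstar_pos)
  then show ?thesis using False \<open>Min (Shom n m \<alpha> Ev j) = _\<close> unfolding Khom_def by simp
qed

lemma homo_pw:
  assumes "0 < \<alpha>" "0 < t"
  shows "ennreal (risk_ratio n Lv (ebh_sel n m \<alpha> (\<lambda>k. Ev k / t))) \<le>
     (\<Sum>j\<in>{1..m}. Gfun t (\<alpha> * Ev (n + j) / real m) (Khom n m \<alpha> Ev j) (Lv (n + j)))"
proof -
  define T where "T = (\<lambda>k. Ev k / t)"
  define R where "R = ebh_sel n m \<alpha> T"
  have "ennreal (risk_ratio n Lv R) \<le> (\<Sum>j\<in>{1..m}. ennreal (if j \<in> R then max 0 (Lv (n+j)) / real (card R) else 0))"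
    unfolding R_def by (rule ennreal_rr_le) (rule sel_sub)
  also have "\<dots> \<le> (\<Sum>j\<in>{1..m}. Gfun t (\<alpha> * Ev (n + j) / real m) (Khom n m \<alpha> Ev j) (Lv (n + j)))"
  proof (rule sum_mono)
    fix j assume j: "j \<in> {1..m}"
    show "ennreal (if j \<in> R then max 0 (Lv (n+j)) / real (card R) else 0) \<le> Gfun t (\<alpha> * Ev (n + j) / real m) (Khom n m \<alpha> Ev j) (Lv (n + j))"
    proof (cases "j \<in> R")
      case False then show ?thesis by simp
    next
      case True
      define c where "c = \<alpha> * Ev (n + j) / real m"
      define S where "S = Shom n m \<alpha> Ev j"
      have ne: "ebh_kset n m \<alpha> T \<noteq> {}" using True by (simp add: R_def sel_iff)
      have cR: "card R = ebh_kstar n m \<alpha> T" using card_sel[OF assms(1) ne] R_def by simp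
      have inS: "ebh_kstar n m \<alpha> T \<in> S" unfolding S_def Shom_def
        using True assms(2) by (auto simp: R_def T_def)
      then have Sne: "S \<noteq> {}" by blast
      have K0: "Khom n m \<alpha> Ev j = real (Min S)" using Sne by (simp add: Khom_def S_def)
      have Kle: "Min S \<le> ebh_kstar n m \<alpha> T" using Min_le[OF Shom_fin inS[unfolded S_def]] S_def by simp
      have "Min S \<in> S" using Min_in[OF Shom_fin Sne[unfolded S_def]] S_def by simp
      then obtain t0 where t0: "Min S = ebh_kstar n m \<alpha> (\<lambda>k. Ev k / t0)" "0 < t0"
        "j \<in> ebh_sel n m \<alpha> (\<lambda>k. Ev k / t0)"
        unfolding S_def Shom_def by blast
      have p0: "t0 \<le> c * real (Min S)"
        using sel_point[OF assms(1) t0(3), of "Ev (n + j)" t0] t0 by (simp add: c_def)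
      have pt: "t \<le> c * real (Min S)"
      proof (cases "t \<le> t0")
        case True then show ?thesis using p0 by linarith
      next
        case False
        have "ebh_kset n m \<alpha> T \<subseteq> ebh_kset n m \<alpha> (\<lambda>k. Ev k / t0)"
        proof (rule mono_kset[OF assms(1)])
          fix i
          show "max 0 (T (n + i)) \<le> max 0 (Ev (n + i) / t0)"
          proof (cases "0 \<le> Ev (n + i)")
            case True
            have "Ev (n + i) / t \<le> Ev (n + i) / t0"
              using False t0(2) True by (intro divide_left_mono) auto
            then show ?thesis unfolding T_def by simp
          next
            case False
            then show ?thesis unfolding T_def using assms(2) t0(2)
              by (simp add: divide_neg_pos)
          qed
        qed
        then have "ebh_kstar n m \<alpha> T \<le> Min S" using kstar_mono[OF ne] t0(1) by simp
        then have eqk: "ebh_kstar n m \<alpha> T = Min S" using Kle by simp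
        have "t \<le> 0 \<or> t \<le> c * real (ebh_kstar n m \<alpha> T)"
          using sel_point[OF assms(1), of j n m T "Ev (n + j)" t] True R_def T_def c_def by (simp add: mult.commute)
        then show ?thesis using eqk assms(2) by simp
      qed
      have "max 0 (Lv (n + j)) / real (card R) \<le> max 0 (Lv (n + j)) / real (Min S)"
        using Kle cR Khom_pos[of n m \<alpha> Ev j] K0
        by (intro divide_left_mono) (auto intro!: mult_pos_pos)
      then show ?thesis using True pt unfolding Gfun_def K0 c_def
        by (auto intro: ennreal_leI)
    qed
  qed
  finally show ?thesis unfolding R_def T_def .
qed

lemma Gfun_int:
  assumes "1 \<le> K" "0 < \<alpha>" "0 < m"
  shows "(\<integral>\<^sup>+t. Gfun t (\<alpha> * e / real m) K l \<partial>uniform_measure lborel {0..1::real})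
     \<le> ennreal (\<alpha> / real m) * ennreal (l * e)"
proof -
  define b where "b = max 0 (\<alpha> * e / real m * K)"
  define U where "U = uniform_measure lborel {0..1::real}"
  have G: "Gfun t (\<alpha> * e / real m) K l = ennreal (max 0 l / K) * indicator {..b} t" for t
    unfolding Gfun_def b_def by (auto simp: indicator_def)
  have "(\<integral>\<^sup>+t. Gfun t (\<alpha> * e / real m) K l \<partial>U) = ennreal (max 0 l / K) * emeasure U {..b}"
    unfolding G by (subst nn_integral_cmult_indicator) (auto simp: U_def)
  also have "emeasure U {..b} = emeasure lborel ({0..1} \<inter> {..b}) / emeasure lborel {0..1::real}"
    unfolding U_def by (rule emeasure_uniform_measure) simp_all
  also have "\<dots> = emeasure lborel ({0..1} \<inter> {..b})" by (simp add: divide_ennreal_def)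
  also have "\<dots> \<le> emeasure lborel {0..b}" by (intro emeasure_mono) auto
  also have "\<dots> = ennreal b" using b_def by simp
  finally have "(\<integral>\<^sup>+t. Gfun t (\<alpha> * e / real m) K l \<partial>U) \<le> ennreal (max 0 l / K) * ennreal b"
    by (simp add: mult_left_mono)
  also have "\<dots> = ennreal (max 0 l / K * b)" by (rule ennreal_mult'[symmetric]) (use assms in auto)
  also have "\<dots> \<le> ennreal (\<alpha> / real m * (l * e))"
  proof (cases "0 \<le> l \<and> 0 \<le> e")
    case True
    then have "b = \<alpha> * e / real m * K" using assms unfolding b_def by simp
    then have "max 0 l / K * b = \<alpha> / real m * (l * e)" using True assms by (simp add: field_simps)
    then show ?thesis by simp
  next
    case False
    then have "max 0 l / K * b = 0"
    proof (cases "l < 0")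
      case True then show ?thesis by simp
    next
      case False
      then have "e < 0" using \<open>\<not> (0 \<le> l \<and> 0 \<le> e)\<close> by simp
      then have "\<alpha> * e / real m * K \<le> 0" using assms
        by (intro mult_nonpos_nonneg divide_nonpos_nonneg mult_nonneg_nonpos) auto
      then show ?thesis unfolding b_def by simp
    qed
    then have "ennreal (max 0 l / K * b) = 0" by (simp only: ennreal_0)
    then show ?thesis by (simp only:) (rule zero_le)
  qed
  also have "\<dots> = ennreal (\<alpha> / real m) * ennreal (l * e)" by (rule ennreal_mult') (use assms in auto)
  finally show ?thesis unfolding U_def .
qed

lemma kset_cong:
  assumes "\<And>j. j \<in> {1..m} \<Longrightarrow> T (n + j) = T' (n + j)"
  shows "ebh_kset n m \<alpha> T = ebh_kset n m \<alpha> T'"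
proof -
  have "{j \<in> {1..m}. real m / (\<alpha> * real k) \<le> T (n + j)} = {j \<in> {1..m}. real m / (\<alpha> * real k) \<le> T' (n + j)}" for k
    using assms by auto
  then show ?thesis unfolding ebh_kset_def by simp
qed

lemma sel_cong:
  assumes "\<And>j. j \<in> {1..m} \<Longrightarrow> T (n + j) = T' (n + j)"
  shows "ebh_sel n m \<alpha> T = ebh_sel n m \<alpha> T'"
proof -
  have k: "ebh_kset n m \<alpha> T = ebh_kset n m \<alpha> T'" by (rule kset_cong) (rule assms)
  then have ks: "ebh_kstar n m \<alpha> T = ebh_kstar n m \<alpha> T'" unfolding ebh_kstar_def by simp
  show ?thesis unfolding ebh_sel_def k ks using assms by auto
qed

lemma rr_cong:
  assumes "\<And>j. j \<in> R \<Longrightarrow> L (n + j) = L' (n + j)"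
  shows "risk_ratio n L R = risk_ratio n L' R"
  unfolding risk_ratio_def using assms by (simp cong: sum.cong)

lemma fub:
  assumes "prob_space M" and X: "X \<in> measurable M S" and Z: "Z \<in> measurable M Q"
    and ind: "distr M S X \<Otimes>\<^sub>M distr M Q Z = distr M (S \<Otimes>\<^sub>M Q) (\<lambda>\<omega>. (X \<omega>, Z \<omega>))"
    and F: "F \<in> borel_measurable (S \<Otimes>\<^sub>M Q)"
  shows "(\<integral>\<^sup>+\<omega>. F (X \<omega>, Z \<omega>) \<partial>M) = (\<integral>\<^sup>+x. \<integral>\<^sup>+z. F (x, z) \<partial>distr M Q Z \<partial>distr M S X)"
proof -
  have XZ: "(\<lambda>\<omega>. (X \<omega>, Z \<omega>)) \<in> measurable M (S \<Otimes>\<^sub>M Q)" using X Z by measurable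
  have "(\<integral>\<^sup>+\<omega>. F (X \<omega>, Z \<omega>) \<partial>M) = integral\<^sup>N (distr M (S \<Otimes>\<^sub>M Q) (\<lambda>\<omega>. (X \<omega>, Z \<omega>))) F"
    by (rule nn_integral_distr[symmetric]) (use XZ F in simp_all)
  also have "\<dots> = integral\<^sup>N (distr M S X \<Otimes>\<^sub>M distr M Q Z) F" using ind by simp
  also have "\<dots> = (\<integral>\<^sup>+x. \<integral>\<^sup>+z. F (x, z) \<partial>distr M Q Z \<partial>distr M S X)"
  proof (rule sigma_finite_measure.nn_integral_fst[symmetric])
    show "sigma_finite_measure (distr M Q Z)"
      by (rule prob_space_imp_sigma_finite, rule prob_space.prob_space_distr[OF assms(1) Z])
    have "sets (distr M S X \<Otimes>\<^sub>M distr M Q Z) = sets (S \<Otimes>\<^sub>M Q)"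
      by (rule sets_pair_measure_cong) simp_all
    then show "F \<in> borel_measurable (distr M S X \<Otimes>\<^sub>M distr M Q Z)"
      using F measurable_cong_sets[OF _ refl] by blast
  qed
  finally show ?thesis .
qed

lemma outer:
  fixes L E :: "nat \<Rightarrow> 'a \<Rightarrow> real"
  assumes "prob_space M" "0 < \<alpha>" "0 < m"
    and Lm: "\<And>j. j \<in> {n+1..n+m} \<Longrightarrow> L j \<in> borel_measurable M"
    and Em: "\<And>j. j \<in> {n+1..n+m} \<Longrightarrow> E j \<in> borel_measurable M"
    and LE: "\<And>j. j \<in> {n+1..n+m} \<Longrightarrow> (\<integral>\<^sup>+ \<omega>. ennreal (L j \<omega> * E j \<omega>) \<partial>M) \<le> 1"
    and X: "X = (\<lambda>\<omega>. \<lambda>j\<in>{n+1..n+m}. (L j \<omega>, E j \<omega>))"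
    and g: "\<And>x. x \<in> space (PiM {n+1..n+m} (\<lambda>_. borel \<Otimes>\<^sub>M borel)) \<Longrightarrow>
        g x \<le> (\<Sum>j\<in>{1..m}. ennreal (\<alpha> / real m) * ennreal (fst (x (n + j)) * snd (x (n + j))))"
  shows "(\<integral>\<^sup>+x. g x \<partial>distr M (PiM {n+1..n+m} (\<lambda>_. borel \<Otimes>\<^sub>M borel)) X) \<le> ennreal \<alpha>"
proof -
  define S where "S = PiM {n+1..n+m} (\<lambda>_. (borel::real measure) \<Otimes>\<^sub>M (borel::real measure))"
  have Xm: "X \<in> measurable M S" unfolding X S_def
  proof (rule measurable_restrict)
    fix i assume "i \<in> {n+1..n+m}"
    note [measurable] = Lm[OF this] Em[OF this]
    show "(\<lambda>\<omega>. (L i \<omega>, E i \<omega>)) \<in> measurable M (borel \<Otimes>\<^sub>M borel)" by measurable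
  qed
  have cm: "(\<lambda>x. fst (x (n + j)) * snd (x (n + j))) \<in> borel_measurable S" if j: "j \<in> {1..m}" for j
  proof -
    have "n + j \<in> {n+1..n+m}" using j by auto
    then have [measurable]: "(\<lambda>x. x (n + j)) \<in> measurable S (borel \<Otimes>\<^sub>M borel)"
      unfolding S_def by (rule measurable_component_singleton)
    show ?thesis by measurable
  qed
  have "(\<integral>\<^sup>+x. g x \<partial>distr M S X) \<le> (\<integral>\<^sup>+x. (\<Sum>j\<in>{1..m}. ennreal (\<alpha> / real m) * ennreal (fst (x (n + j)) * snd (x (n + j)))) \<partial>distr M S X)"
    by (rule nn_integral_mono) (use g in \<open>simp add: S_def\<close>)
  also have "\<dots> = (\<Sum>j\<in>{1..m}. \<integral>\<^sup>+x. ennreal (\<alpha> / real m) * ennreal (fst (x (n + j)) * snd (x (n + j))) \<partial>distr M S X)"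
    by (rule nn_integral_sum) (use cm in simp)
  also have "\<dots> = (\<Sum>j\<in>{1..m}. \<integral>\<^sup>+\<omega>. ennreal (\<alpha> / real m) * ennreal (L (n + j) \<omega> * E (n + j) \<omega>) \<partial>M)"
  proof (rule sum.cong[OF refl])
    fix j assume j: "j \<in> {1..m}"
    have "(\<integral>\<^sup>+x. ennreal (\<alpha> / real m) * ennreal (fst (x (n + j)) * snd (x (n + j))) \<partial>distr M S X)
      = (\<integral>\<^sup>+\<omega>. ennreal (\<alpha> / real m) * ennreal (fst (X \<omega> (n + j)) * snd (X \<omega> (n + j))) \<partial>M)"
      by (rule nn_integral_distr[OF Xm]) (use cm[OF j] in simp)
    also have "\<dots> = (\<integral>\<^sup>+\<omega>. ennreal (\<alpha> / real m) * ennreal (L (n + j) \<omega> * E (n + j) \<omega>) \<partial>M)"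
      using j unfolding X by simp
    finally show "(\<integral>\<^sup>+x. ennreal (\<alpha> / real m) * ennreal (fst (x (n + j)) * snd (x (n + j))) \<partial>distr M S X)
      = (\<integral>\<^sup>+\<omega>. ennreal (\<alpha> / real m) * ennreal (L (n + j) \<omega> * E (n + j) \<omega>) \<partial>M)" .
  qed
  also have "\<dots> \<le> (\<Sum>j\<in>{1..m}. ennreal (\<alpha> / real m) * 1)"
  proof (rule sum_mono)
    fix j assume j: "j \<in> {1..m}"
    then have jI: "n + j \<in> {n+1..n+m}" by auto
    note [measurable] = Lm[OF jI] Em[OF jI]
    have "(\<integral>\<^sup>+\<omega>. ennreal (\<alpha> / real m) * ennreal (L (n + j) \<omega> * E (n + j) \<omega>) \<partial>M)
       = ennreal (\<alpha> / real m) * (\<integral>\<^sup>+\<omega>. ennreal (L (n + j) \<omega> * E (n + j) \<omega>) \<partial>M)"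
      by (rule nn_integral_cmult) measurable
    also have "\<dots> \<le> ennreal (\<alpha> / real m) * 1"
      by (rule mult_left_mono) (use LE[OF jI] in auto)
    finally show "(\<integral>\<^sup>+\<omega>. ennreal (\<alpha> / real m) * ennreal (L (n + j) \<omega> * E (n + j) \<omega>) \<partial>M) \<le> ennreal (\<alpha> / real m) * 1" .
  qed
  also have "\<dots> = ennreal (real m * (\<alpha> / real m))"
    using assms by (simp add: ennreal_of_nat_eq_real_of_nat ennreal_mult'[symmetric])
  also have "\<dots> = ennreal \<alpha>" using assms by simp
  finally show ?thesis unfolding S_def .
qed

lemma U_prob: "prob_space (uniform_measure lborel {0..1::real})"
  by (rule prob_space_uniform_measure) simp_all

lemma comp_meas:
  assumes "k \<in> I"
  shows "(\<lambda>z. z k) \<in> borel_measurable (PiM I (\<lambda>_. uniform_measure lborel {0..1::real}))"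
proof -
  have "(\<lambda>z. z k) \<in> measurable (PiM I (\<lambda>_. uniform_measure lborel {0..1::real})) (uniform_measure lborel {0..1::real})"
    by (rule measurable_component_singleton[OF assms])
  moreover have "sets (uniform_measure lborel {0..1::real}) = sets (borel :: real measure)" by simp
  ultimately show ?thesis using measurable_cong_sets[OF refl] by blast
qed

lemma meas_G:
  assumes "j \<in> {1..m}"
  shows "(\<lambda>z. Gfun (z (n + j)) c (Khet n m \<alpha> Ev z j) a) \<in> borel_measurable (PiM {n+1..n+m} (\<lambda>_. uniform_measure lborel {0..1::real}))"
proof -
  let ?P = "PiM {n+1..n+m} (\<lambda>_. uniform_measure lborel {0..1::real})"
  have cm: "(\<lambda>z. z (n + j')) \<in> borel_measurable ?P" if "j' \<in> {1..m}" for j'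
    by (rule comp_meas) (use that in auto)
  have K[measurable]: "(\<lambda>z. Khet n m \<alpha> Ev z j) \<in> borel_measurable ?P"
    unfolding Khet_def
  proof (rule meas_kstar)
    fix j' assume j': "j' \<in> {1..m}"
    show "(\<lambda>z. ((\<lambda>k. Ev k / z k)(n + j := real m / \<alpha>)) (n + j')) \<in> borel_measurable ?P"
    proof (cases "j' = j")
      case True then show ?thesis by simp
    next
      case False
      note [measurable] = cm[OF j']
      have eq: "(\<lambda>z. ((\<lambda>k. Ev k / z k)(n + j := real m / \<alpha>)) (n + j')) = (\<lambda>z. Ev (n + j') / z (n + j'))"
        using False by auto
      show ?thesis unfolding eq by measurable
    qed
  qed
  have Z[measurable]: "(\<lambda>z. z (n + j)) \<in> borel_measurable ?P" by (rule cm[OF assms])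
  have K2: "(\<lambda>z. c * Khet n m \<alpha> Ev z j) \<in> borel_measurable ?P"
    by (intro borel_measurable_times borel_measurable_const K)
  have h: "(\<lambda>z. ennreal (max 0 a / Khet n m \<alpha> Ev z j)) \<in> borel_measurable ?P"
    using K by measurable
  have s1: "{z \<in> space ?P. z (n + j) \<le> 0} \<in> sets ?P"
    by (rule borel_measurable_le[OF Z borel_measurable_const])
  have s2: "{z \<in> space ?P. z (n + j) \<le> c * Khet n m \<alpha> Ev z j} \<in> sets ?P"
    by (rule borel_measurable_le[OF Z K2])
  have "{z \<in> space ?P. z (n + j) \<le> 0 \<or> z (n + j) \<le> c * Khet n m \<alpha> Ev z j}
      = {z \<in> space ?P. z (n + j) \<le> 0} \<union> {z \<in> space ?P. z (n + j) \<le> c * Khet n m \<alpha> Ev z j}" by auto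
  then have s: "{z \<in> space ?P. z (n + j) \<le> 0 \<or> z (n + j) \<le> c * Khet n m \<alpha> Ev z j} \<in> sets ?P"
    using s1 s2 by simp
  show ?thesis unfolding Gfun_def by (rule measurable_If[OF h _ s]) simp
qed

lemma het_j:
  assumes "0 < \<alpha>" "j \<in> {1..m}"
  shows "(\<integral>\<^sup>+z. Gfun (z (n + j)) (\<alpha> * Ev (n + j) / real m) (Khet n m \<alpha> Ev z j) a
      \<partial>PiM {n+1..n+m} (\<lambda>_. uniform_measure lborel {0..1::real}))
    \<le> ennreal (\<alpha> / real m) * ennreal (a * Ev (n + j))"
proof -
  define U where "U = uniform_measure lborel {0..1::real}"
  define I' where "I' = {n+1..n+m} - {n + j}"
  have II: "insert (n + j) I' = {n+1..n+m}" using assms(2) by (auto simp: I'_def)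
  have m0: "0 < m" using assms(2) by auto
  interpret PS: product_sigma_finite "\<lambda>_. U"
    unfolding product_sigma_finite_def using prob_space_imp_sigma_finite[OF U_prob] U_def by simp
  have f: "(\<lambda>z. Gfun (z (n + j)) (\<alpha> * Ev (n + j) / real m) (Khet n m \<alpha> Ev z j) a) \<in> borel_measurable (PiM (insert (n + j) I') (\<lambda>_. U))"
    unfolding II U_def by (rule meas_G[OF assms(2)])
  have "(\<integral>\<^sup>+z. Gfun (z (n + j)) (\<alpha> * Ev (n + j) / real m) (Khet n m \<alpha> Ev z j) a \<partial>PiM (insert (n + j) I') (\<lambda>_. U))
     = (\<integral>\<^sup>+x. (\<integral>\<^sup>+y. Gfun ((x(n + j := y)) (n + j)) (\<alpha> * Ev (n + j) / real m) (Khet n m \<alpha> Ev (x(n + j := y)) j) a \<partial>U) \<partial>PiM I' (\<lambda>_. U))"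
    by (rule PS.product_nn_integral_insert[OF _ _ f]) (simp_all add: I'_def)
  also have "\<dots> = (\<integral>\<^sup>+x. (\<integral>\<^sup>+y. Gfun y (\<alpha> * Ev (n + j) / real m) (Khet n m \<alpha> Ev x j) a \<partial>U) \<partial>PiM I' (\<lambda>_. U))"
    by (simp add: Khet_upd)
  also have "\<dots> \<le> (\<integral>\<^sup>+x. ennreal (\<alpha> / real m) * ennreal (a * Ev (n + j)) \<partial>PiM I' (\<lambda>_. U))"
    by (rule nn_integral_mono) (unfold U_def, rule Gfun_int[OF Khet_pos[OF assms] assms(1) m0])
  also have "\<dots> = ennreal (\<alpha> / real m) * ennreal (a * Ev (n + j))"
  proof -
    interpret PP: prob_space "PiM I' (\<lambda>_. U)" by (rule prob_space_PiM) (simp add: U_def U_prob)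
    show ?thesis by (simp add: PP.emeasure_space_1)
  qed
  finally show ?thesis unfolding II U_def .
qed

lemma het_inner:
  assumes "0 < \<alpha>" "0 < m"
  shows "(\<integral>\<^sup>+z. ennreal (risk_ratio n (\<lambda>k. fst (x k)) (ebh_sel n m \<alpha> (\<lambda>k. snd (x k) / z k)))
     \<partial>PiM {n+1..n+m} (\<lambda>_. uniform_measure lborel {0..1::real}))
   \<le> (\<Sum>j\<in>{1..m}. ennreal (\<alpha> / real m) * ennreal (fst (x (n + j)) * snd (x (n + j))))"
proof -
  let ?P = "PiM {n+1..n+m} (\<lambda>_. uniform_measure lborel {0..1::real})"
  let ?Ev = "\<lambda>k. snd (x k)" and ?Lv = "\<lambda>k. fst (x k)"
  have "(\<integral>\<^sup>+z. ennreal (risk_ratio n ?Lv (ebh_sel n m \<alpha> (\<lambda>k. ?Ev k / z k))) \<partial>?P)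
     \<le> (\<integral>\<^sup>+z. (\<Sum>j\<in>{1..m}. Gfun (z (n + j)) (\<alpha> * ?Ev (n + j) / real m) (Khet n m \<alpha> ?Ev z j) (?Lv (n + j))) \<partial>?P)"
    by (rule nn_integral_mono) (rule hetero_pw[OF assms(1)])
  also have "\<dots> = (\<Sum>j\<in>{1..m}. \<integral>\<^sup>+z. Gfun (z (n + j)) (\<alpha> * ?Ev (n + j) / real m) (Khet n m \<alpha> ?Ev z j) (?Lv (n + j)) \<partial>?P)"
    by (rule nn_integral_sum) (rule meas_G)
  also have "\<dots> \<le> (\<Sum>j\<in>{1..m}. ennreal (\<alpha> / real m) * ennreal (?Lv (n + j) * ?Ev (n + j)))"
    by (rule sum_mono) (rule het_j[OF assms(1)])
  finally show ?thesis .
qed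

lemma hom_inner:
  assumes "0 < \<alpha>" "0 < m"
  shows "(\<integral>\<^sup>+t. ennreal (risk_ratio n (\<lambda>k. fst (x k)) (ebh_sel n m \<alpha> (\<lambda>k. snd (x k) / t)))
     \<partial>uniform_measure lborel {0..1::real})
   \<le> (\<Sum>j\<in>{1..m}. ennreal (\<alpha> / real m) * ennreal (fst (x (n + j)) * snd (x (n + j))))"
proof -
  let ?U = "uniform_measure lborel {0..1::real}"
  let ?Ev = "\<lambda>k. snd (x k)" and ?Lv = "\<lambda>k. fst (x k)"
  have AE: "AE t in ?U. 0 < t"
  proof (rule AE_uniform_measureI)
    show "{0..1::real} \<in> sets lborel" by simp
    show "AE t in lborel. t \<in> {0..1::real} \<longrightarrow> 0 < t"
      using AE_lborel_singleton[of "0::real"] by eventually_elim auto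
  qed
  have "(\<integral>\<^sup>+t. ennreal (risk_ratio n ?Lv (ebh_sel n m \<alpha> (\<lambda>k. ?Ev k / t))) \<partial>?U)
     \<le> (\<integral>\<^sup>+t. (\<Sum>j\<in>{1..m}. Gfun t (\<alpha> * ?Ev (n + j) / real m) (Khom n m \<alpha> ?Ev j) (?Lv (n + j))) \<partial>?U)"
  proof (rule nn_integral_mono_AE)
    show "AE t in ?U. ennreal (risk_ratio n ?Lv (ebh_sel n m \<alpha> (\<lambda>k. ?Ev k / t))) \<le>
       (\<Sum>j\<in>{1..m}. Gfun t (\<alpha> * ?Ev (n + j) / real m) (Khom n m \<alpha> ?Ev j) (?Lv (n + j)))"
      using AE
    proof eventually_elim
      case (elim t) then show ?case by (rule homo_pw[OF assms(1)])
    qed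
  qed
  also have "\<dots> = (\<Sum>j\<in>{1..m}. \<integral>\<^sup>+t. Gfun t (\<alpha> * ?Ev (n + j) / real m) (Khom n m \<alpha> ?Ev j) (?Lv (n + j)) \<partial>?U)"
    by (rule nn_integral_sum) (unfold Gfun_def, measurable)
  also have "\<dots> \<le> (\<Sum>j\<in>{1..m}. ennreal (\<alpha> / real m) * ennreal (?Lv (n + j) * ?Ev (n + j)))"
    by (rule sum_mono) (rule Gfun_int[OF Khom_pos assms])
  finally show ?thesis .
qed

lemma (in prob_space) indep_set_distr_eq:
  assumes X: "X \<in> measurable M S" and Y: "Y \<in> measurable M T"
    and ind: "indep_set (sets (vimage_algebra (space M) X S)) (sets (vimage_algebra (space M) Y T))"
  shows "distr M S X \<Otimes>\<^sub>M distr M T Y = distr M (S \<Otimes>\<^sub>M T) (\<lambda>x. (X x, Y x))"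
proof -
  have XY: "(\<lambda>x. (X x, Y x)) \<in> measurable M (S \<Otimes>\<^sub>M T)" using X Y by (rule measurable_Pair)
  interpret X: prob_space "distr M S X" by (rule prob_space_distr) (rule X)
  interpret Y: prob_space "distr M T Y" by (rule prob_space_distr) (rule Y)
  interpret XY: pair_prob_space "distr M S X" "distr M T Y" ..
  show ?thesis
  proof (rule pair_measure_eqI)
    show "sigma_finite_measure (distr M S X)" ..
    show "sigma_finite_measure (distr M T Y)" ..
    fix A B assume A: "A \<in> sets (distr M S X)" and B: "B \<in> sets (distr M T Y)"
    have a: "X -` A \<inter> space M \<in> sets (vimage_algebra (space M) X S)" using A by (intro in_vimage_algebra) simp
    have b: "Y -` B \<inter> space M \<in> sets (vimage_algebra (space M) Y T)" using B by (intro in_vimage_algebra) simp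
    have ea: "X -` A \<inter> space M \<in> events" using A X by (simp add: measurable_sets)
    have eb: "Y -` B \<inter> space M \<in> events" using B Y by (simp add: measurable_sets)
    have "emeasure (distr M (S \<Otimes>\<^sub>M T) (\<lambda>x. (X x, Y x))) (A \<times> B) = emeasure M ((\<lambda>x. (X x, Y x)) -` (A \<times> B) \<inter> space M)"
      using A B by (intro emeasure_distr[OF XY]) auto
    also have "(\<lambda>x. (X x, Y x)) -` (A \<times> B) \<inter> space M = (X -` A \<inter> space M) \<inter> (Y -` B \<inter> space M)" by auto
    also have "emeasure M ((X -` A \<inter> space M) \<inter> (Y -` B \<inter> space M)) = emeasure M (X -` A \<inter> space M) * emeasure M (Y -` B \<inter> space M)"
      using indep_setD[OF ind a b] ea eb
      by (simp add: emeasure_eq_measure measure_nonneg ennreal_mult)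
    also have "\<dots> = emeasure (distr M S X) A * emeasure (distr M T Y) B"
      using X Y A B by (simp add: emeasure_distr)
    finally show "emeasure (distr M S X) A * emeasure (distr M T Y) B = emeasure (distr M (S \<Otimes>\<^sub>M T) (\<lambda>x. (X x, Y x))) (A \<times> B)" by simp
  qed simp
qed

theorem theorem5p2:
  fixes M :: "'a measure" and n m :: nat and \<alpha> :: real
    and L E :: "nat \<Rightarrow> 'a \<Rightarrow> real"
  assumes "prob_space M"
    and "0 < \<alpha>" and "\<alpha> < 1"
    and "\<And>j. j \<in> {n+1..n+m} \<Longrightarrow> L j \<in> borel_measurable M"
    and "\<And>j. j \<in> {n+1..n+m} \<Longrightarrow> E j \<in> borel_measurable M"
    and "\<And>j. j \<in> {n+1..n+m} \<Longrightarrow> AE \<omega> in M. L j \<omega> \<ge> 0"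
    and "\<And>j. j \<in> {n+1..n+m} \<Longrightarrow> AE \<omega> in M. E j \<omega> \<ge> 0"
    and "\<And>j. j \<in> {n+1..n+m} \<Longrightarrow> (\<integral>\<^sup>+ \<omega>. ennreal (L j \<omega> * E j \<omega>) \<partial>M) \<le> 1"
  shows
    "(\<forall>\<xi> :: nat \<Rightarrow> 'a \<Rightarrow> real.
        (\<forall>j \<in> {n+1..n+m}. distr M borel (\<xi> j) = uniform_measure lborel {0..1})
        \<and> prob_space.indep_vars M (\<lambda>_. borel) \<xi> {n+1..n+m}
        \<and> (\<forall>j \<in> {n+1..n+m}. \<xi> j \<in> borel_measurable M)
        \<and> prob_space.indep_set M
            (sets (vimage_algebra (space M) (\<lambda>\<omega>. \<lambda>j\<in>{n+1..n+m}. (L j \<omega>, E j \<omega>))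
                   (PiM {n+1..n+m} (\<lambda>_. borel \<Otimes>\<^sub>M borel))))
            (sets (vimage_algebra (space M) (\<lambda>\<omega>. \<lambda>j\<in>{n+1..n+m}. \<xi> j \<omega>)
                   (PiM {n+1..n+m} (\<lambda>_. borel))))
      \<longrightarrow> (\<integral>\<^sup>+ \<omega>. ennreal (risk_ratio n (\<lambda>j. L j \<omega>)
                 (ebh_sel n m \<alpha> (\<lambda>j. E j \<omega> / \<xi> j \<omega>))) \<partial>M) \<le> ennreal \<alpha>)
     \<and>
     (\<forall>\<xi> :: 'a \<Rightarrow> real.
        distr M borel \<xi> = uniform_measure lborel {0..1}
        \<and> \<xi> \<in> borel_measurable M
        \<and> prob_space.indep_set M
            (sets (vimage_algebra (space M) (\<lambda>\<omega>. \<lambda>j\<in>{n+1..n+m}. (L j \<omega>, E j \<omega>))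
                   (PiM {n+1..n+m} (\<lambda>_. borel \<Otimes>\<^sub>M borel))))
            (sets (vimage_algebra (space M) \<xi> borel))
      \<longrightarrow> (\<integral>\<^sup>+ \<omega>. ennreal (risk_ratio n (\<lambda>j. L j \<omega>)
                 (ebh_sel n m \<alpha> (\<lambda>j. E j \<omega> / \<xi> \<omega>))) \<partial>M) \<le> ennreal \<alpha>)"
proof -
  interpret P: prob_space M by (rule assms(1))
  show ?thesis
  proof (cases "m = 0")
    case True
    have "ebh_sel n m \<alpha> T = {}" for T using sel_sub[of n m \<alpha> T] True by auto
    then have rr0: "risk_ratio n L' (ebh_sel n m \<alpha> T) = 0" for L' T by (simp add: risk_ratio_def)
    show ?thesis unfolding rr0 by simp
  next
    case False
    then have m0: "0 < m" by simp
    define S where "S = PiM {n+1..n+m} (\<lambda>_. (borel::real measure) \<Otimes>\<^sub>M (borel::real measure))"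
    define X where "X = (\<lambda>\<omega>. \<lambda>j\<in>{n+1..n+m}. (L j \<omega>, E j \<omega>))"
    define U where "U = uniform_measure lborel {0..1::real}"
    have Xm: "X \<in> measurable M S" unfolding X_def S_def
    proof (rule measurable_restrict)
      fix i assume "i \<in> {n+1..n+m}"
      note [measurable] = assms(4)[OF this] assms(5)[OF this]
      show "(\<lambda>\<omega>. (L i \<omega>, E i \<omega>)) \<in> measurable M (borel \<Otimes>\<^sub>M borel)" by measurable
    qed
    have OUT: "(\<integral>\<^sup>+x. g x \<partial>distr M S X) \<le> ennreal \<alpha>"
      if "\<And>x. x \<in> space S \<Longrightarrow>
        g x \<le> (\<Sum>j\<in>{1..m}. ennreal (\<alpha> / real m) * ennreal (fst (x (n + j)) * snd (x (n + j))))" for g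
      unfolding S_def
      apply (rule outer[OF assms(1,2) m0])
          apply (erule assms(4))
         apply (erule assms(5))
        apply (erule assms(8))
       apply (rule X_def)
      apply (erule that[unfolded S_def])
      done
    have Xv: "X \<omega> (n + j) = (L (n + j) \<omega>, E (n + j) \<omega>)" if "j \<in> {1..m}" for \<omega> j
      using that by (simp add: X_def)
    show ?thesis
    proof (intro conjI allI impI, goal_cases)
      case (1 \<xi>)
      then have Hd: "\<And>j. j \<in> {n+1..n+m} \<Longrightarrow> distr M borel (\<xi> j) = U"
        and Hi: "P.indep_vars (\<lambda>_. borel) \<xi> {n+1..n+m}"
        and Hm: "\<And>j. j \<in> {n+1..n+m} \<Longrightarrow> \<xi> j \<in> borel_measurable M"
        and Hs: "P.indep_set (sets (vimage_algebra (space M) X S))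
            (sets (vimage_algebra (space M) (\<lambda>\<omega>. \<lambda>j\<in>{n+1..n+m}. \<xi> j \<omega>) (PiM {n+1..n+m} (\<lambda>_. borel))))"
        by (auto simp: U_def X_def S_def)
      define Z where "Z = (\<lambda>\<omega>. \<lambda>j\<in>{n+1..n+m}. \<xi> j \<omega>)"
      define Q where "Q = PiM {n+1..n+m} (\<lambda>_. borel::real measure)"
      have Zm: "Z \<in> measurable M Q" unfolding Z_def Q_def
        by (rule measurable_restrict) (rule Hm)
      have ind: "distr M S X \<Otimes>\<^sub>M distr M Q Z = distr M (S \<Otimes>\<^sub>M Q) (\<lambda>\<omega>. (X \<omega>, Z \<omega>))"
        by (rule P.indep_set_distr_eq[OF Xm Zm]) (use Hs in \<open>simp add: Z_def Q_def\<close>)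
      have "distr M Q Z = PiM {n+1..n+m} (\<lambda>i. distr M borel (\<xi> i))"
        using P.indep_vars_iff_distr_eq_PiM'[where I="{n+1..n+m}" and M'="\<lambda>_. borel" and X=\<xi>] Hi Hm m0
        unfolding Q_def Z_def by simp
      also have "\<dots> = PiM {n+1..n+m} (\<lambda>_. U)" by (rule PiM_cong) (simp_all add: Hd)
      finally have dZ: "distr M Q Z = PiM {n+1..n+m} (\<lambda>_. U)" .
      define F where "F = (\<lambda>p. ennreal (risk_ratio n (\<lambda>k. fst (fst p k)) (ebh_sel n m \<alpha> (\<lambda>k. snd (fst p k) / snd p k))))"
      have Fm: "F \<in> borel_measurable (S \<Otimes>\<^sub>M Q)"
      proof -
        have c1: "(\<lambda>p. fst p (n + j)) \<in> measurable (S \<Otimes>\<^sub>M Q) (borel \<Otimes>\<^sub>M borel)" if "j \<in> {1..m}" for j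
          unfolding S_def by (rule measurable_compose[OF measurable_fst measurable_component_singleton]) (use that in auto)
        have c2: "(\<lambda>p. snd p (n + j)) \<in> measurable (S \<Otimes>\<^sub>M Q) borel" if "j \<in> {1..m}" for j
          unfolding Q_def by (rule measurable_compose[OF measurable_snd measurable_component_singleton]) (use that in auto)
        have "(\<lambda>p. risk_ratio n (\<lambda>k. fst (fst p k)) (ebh_sel n m \<alpha> (\<lambda>k. snd (fst p k) / snd p k))) \<in> borel_measurable (S \<Otimes>\<^sub>M Q)"
        proof (rule meas_rr)
          fix j assume j: "j \<in> {1..m}"
          note [measurable] = c1[OF j] c2[OF j]
          show "(\<lambda>p. snd (fst p (n + j)) / snd p (n + j)) \<in> borel_measurable (S \<Otimes>\<^sub>M Q)" by measurable
          show "(\<lambda>p. fst (fst p (n + j))) \<in> borel_measurable (S \<Otimes>\<^sub>M Q)" by measurable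
        qed
        then show ?thesis unfolding F_def by measurable
      qed
      have "(\<integral>\<^sup>+ \<omega>. ennreal (risk_ratio n (\<lambda>j. L j \<omega>) (ebh_sel n m \<alpha> (\<lambda>j. E j \<omega> / \<xi> j \<omega>))) \<partial>M)
          = (\<integral>\<^sup>+ \<omega>. F (X \<omega>, Z \<omega>) \<partial>M)"
      proof (rule nn_integral_cong)
        fix \<omega> assume "\<omega> \<in> space M"
        have s: "ebh_sel n m \<alpha> (\<lambda>j. E j \<omega> / \<xi> j \<omega>) = ebh_sel n m \<alpha> (\<lambda>k. snd (X \<omega> k) / Z \<omega> k)"
          by (rule sel_cong) (simp add: Xv Z_def)
        have r: "risk_ratio n (\<lambda>j. L j \<omega>) (ebh_sel n m \<alpha> (\<lambda>k. snd (X \<omega> k) / Z \<omega> k)) =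
            risk_ratio n (\<lambda>k. fst (X \<omega> k)) (ebh_sel n m \<alpha> (\<lambda>k. snd (X \<omega> k) / Z \<omega> k))"
          by (rule rr_cong) (use sel_sub Xv in force)
        show "ennreal (risk_ratio n (\<lambda>j. L j \<omega>) (ebh_sel n m \<alpha> (\<lambda>j. E j \<omega> / \<xi> j \<omega>))) = F (X \<omega>, Z \<omega>)"
          unfolding F_def s r by simp
      qed
      also have "\<dots> = (\<integral>\<^sup>+x. \<integral>\<^sup>+z. F (x, z) \<partial>distr M Q Z \<partial>distr M S X)"
        by (rule fub[OF assms(1) Xm Zm ind Fm])
      also have "\<dots> \<le> ennreal \<alpha>"
      proof (rule OUT)
        fix x
        show "(\<integral>\<^sup>+z. F (x, z) \<partial>distr M Q Z) \<le> (\<Sum>j\<in>{1..m}. ennreal (\<alpha> / real m) * ennreal (fst (x (n + j)) * snd (x (n + j))))"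
          unfolding dZ F_def U_def using het_inner[OF assms(2) m0, of n x] by simp
      qed
      finally show ?case .
    next
      case (2 \<xi>)
      then have Hd: "distr M borel \<xi> = U"
        and Hm: "\<xi> \<in> borel_measurable M"
        and Hs: "P.indep_set (sets (vimage_algebra (space M) X S)) (sets (vimage_algebra (space M) \<xi> borel))"
        by (auto simp: U_def X_def S_def)
      have ind: "distr M S X \<Otimes>\<^sub>M distr M borel \<xi> = distr M (S \<Otimes>\<^sub>M borel) (\<lambda>\<omega>. (X \<omega>, \<xi> \<omega>))"
        by (rule P.indep_set_distr_eq[OF Xm Hm Hs])
      define F where "F = (\<lambda>p. ennreal (risk_ratio n (\<lambda>k. fst (fst p k)) (ebh_sel n m \<alpha> (\<lambda>k. snd (fst p k) / (snd p :: real)))))"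
      have Fm: "F \<in> borel_measurable (S \<Otimes>\<^sub>M borel)"
      proof -
        have c1: "(\<lambda>p. fst p (n + j)) \<in> measurable (S \<Otimes>\<^sub>M (borel :: real measure)) (borel \<Otimes>\<^sub>M borel)" if "j \<in> {1..m}" for j
          unfolding S_def by (rule measurable_compose[OF measurable_fst measurable_component_singleton]) (use that in auto)
        have "(\<lambda>p. risk_ratio n (\<lambda>k. fst (fst p k)) (ebh_sel n m \<alpha> (\<lambda>k. snd (fst p k) / (snd p :: real)))) \<in> borel_measurable (S \<Otimes>\<^sub>M borel)"
        proof (rule meas_rr)
          fix j assume j: "j \<in> {1..m}"
          note [measurable] = c1[OF j]
          show "(\<lambda>p. snd (fst p (n + j)) / (snd p :: real)) \<in> borel_measurable (S \<Otimes>\<^sub>M borel)" by measurable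
          show "(\<lambda>p. fst (fst p (n + j))) \<in> borel_measurable (S \<Otimes>\<^sub>M (borel :: real measure))" by measurable
        qed
        then show ?thesis unfolding F_def by measurable
      qed
      have "(\<integral>\<^sup>+ \<omega>. ennreal (risk_ratio n (\<lambda>j. L j \<omega>) (ebh_sel n m \<alpha> (\<lambda>j. E j \<omega> / \<xi> \<omega>))) \<partial>M)
          = (\<integral>\<^sup>+ \<omega>. F (X \<omega>, \<xi> \<omega>) \<partial>M)"
      proof (rule nn_integral_cong)
        fix \<omega> assume "\<omega> \<in> space M"
        have s: "ebh_sel n m \<alpha> (\<lambda>j. E j \<omega> / \<xi> \<omega>) = ebh_sel n m \<alpha> (\<lambda>k. snd (X \<omega> k) / \<xi> \<omega>)"
          by (rule sel_cong) (simp add: Xv)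
        have r: "risk_ratio n (\<lambda>j. L j \<omega>) (ebh_sel n m \<alpha> (\<lambda>k. snd (X \<omega> k) / \<xi> \<omega>)) =
            risk_ratio n (\<lambda>k. fst (X \<omega> k)) (ebh_sel n m \<alpha> (\<lambda>k. snd (X \<omega> k) / \<xi> \<omega>))"
          by (rule rr_cong) (use sel_sub Xv in force)
        show "ennreal (risk_ratio n (\<lambda>j. L j \<omega>) (ebh_sel n m \<alpha> (\<lambda>j. E j \<omega> / \<xi> \<omega>))) = F (X \<omega>, \<xi> \<omega>)"
          unfolding F_def s r by simp
      qed
      also have "\<dots> = (\<integral>\<^sup>+x. \<integral>\<^sup>+z. F (x, z) \<partial>distr M borel \<xi> \<partial>distr M S X)"
        by (rule fub[OF assms(1) Xm Hm ind Fm])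
      also have "\<dots> \<le> ennreal \<alpha>"
      proof (rule OUT)
        fix x
        show "(\<integral>\<^sup>+z. F (x, z) \<partial>distr M borel \<xi>) \<le> (\<Sum>j\<in>{1..m}. ennreal (\<alpha> / real m) * ennreal (fst (x (n + j)) * snd (x (n + j))))"
          unfolding Hd F_def U_def using hom_inner[OF assms(2) m0, of n x] by simp
      qed
      finally show ?case .
    qed
  qed
qed

end
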